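(* Let $(M_0,d,\Gamma)$ be a cone-like space. For every $x\in M_0$ there is a constant $K_x>0$ such that $d(x,f(x))<K_x$ for every $f\in\Gamma$ with $\rho(f)<1$.
   Context: A cone-like space is a locally compact metric space $(M_0,d)$ together with a finitely generated, non-trivial group $\Gamma$ acting freely and properly discontinuously on $M_0$ by homotheties (i.e. for each $f\in\Gamma$ there is $\rho(f)>0$ with $d(f(x),f(y))=\rho(f)d(x,y)$ for all $x,y$), such that the identity is the only element of $\Gamma$ acting as an isometry, and such that the quotient $M_0/\Gamma$ is compact. (Such a $\Gamma$ is necessarily Abelian.) *)

theory Defs
  imports "HOL-Analysis.Analysis"
begin

inductive_set gen_group :: "('a \<Rightarrow> 'a) set \<Rightarrow> ('a \<Rightarrow> 'a) set" for S where
  gen_id: "id \<in> gen_group S"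
| gen_in: "f \<in> S \<Longrightarrow> f \<in> gen_group S"
| gen_inv: "f \<in> S \<Longrightarrow> inv f \<in> gen_group S"
| gen_comp: "f \<in> gen_group S \<Longrightarrow> g \<in> gen_group S \<Longrightarrow> f \<circ> g \<in> gen_group S"

definition orbit :: "('a \<Rightarrow> 'a) set \<Rightarrow> 'a \<Rightarrow> 'a set" where
  "orbit G x = (\<lambda>f. f x) ` G"

text \<open>Quotient topology on the orbit space M/G (M = UNIV carrying its metric topology).\<close>
definition orbit_space_topology :: "('a::topological_space \<Rightarrow> 'a) set \<Rightarrow> 'a set topology" where
  "orbit_space_topology G =
     topology (\<lambda>U. U \<subseteq> range (orbit G) \<and> open (\<Union>U))"

text \<open>Cone-like space: the metric space is the type 'a (M_0 = UNIV), G the group,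
  rho the homothety ratio.\<close>
definition cone_like_space :: "('a::metric_space \<Rightarrow> 'a) set \<Rightarrow> (('a \<Rightarrow> 'a) \<Rightarrow> real) \<Rightarrow> bool" where
  "cone_like_space G rho \<longleftrightarrow>
     locally compact (UNIV :: 'a set)
   \<and> (\<forall>f\<in>G. bij f)
   \<and> (\<exists>S. finite S \<and> G = gen_group S)
   \<and> G \<noteq> {id}
   \<and> (\<forall>f\<in>G. rho f > 0 \<and> (\<forall>x y. dist (f x) (f y) = rho f * dist x y))
   \<and> (\<forall>f\<in>G. \<forall>x. f x = x \<longrightarrow> f = id)
   \<and> (\<forall>K. compact K \<longrightarrow> finite {f\<in>G. f ` K \<inter> K \<noteq> {}})
   \<and> (\<forall>f\<in>G. (\<forall>x y. dist (f x) (f y) = dist x y) \<longrightarrow> f = id)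
   \<and> compact_space (orbit_space_topology G)"

end

theory Submission
  imports Defs
begin

lemma inv_closed:
  assumes B: "\<forall>f\<in>gen_group S. bij f" and f: "f \<in> gen_group S"
  shows "inv f \<in> gen_group S"
  using f
proof (induction f rule: gen_group.induct)
  case gen_id
  then show ?case using gen_group.gen_id by (metis inv_id)
next
  case (gen_in f)
  then show ?case by (rule gen_group.gen_inv)
next
  case (gen_inv f)
  have "bij f" using B gen_group.gen_in[OF gen_inv] by blast
  then show ?case using gen_inv by (simp add: inv_inv_eq gen_group.gen_in)
next
  case (gen_comp f g)
  have "bij f" "bij g" using B gen_comp by blast+
  then show ?case using gen_comp o_inv_distrib[of f g] gen_group.gen_comp[of "inv g" S "inv f"] by metis
qed

theorem lemma2p4:
  fixes G :: "('a::metric_space \<Rightarrow> 'a) set" and rho :: "('a \<Rightarrow> 'a) \<Rightarrow> real"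
  assumes "cone_like_space G rho"
  shows "\<forall>x. \<exists>K>0. \<forall>f\<in>G. rho f < 1 \<longrightarrow> dist x (f x) < K"
proof -
  have bijG: "\<forall>f\<in>G. bij f" and hom: "\<forall>f\<in>G. rho f > 0 \<and> (\<forall>x y. dist (f x) (f y) = rho f * dist x y)"
    and iso: "\<forall>f\<in>G. (\<forall>x y. dist (f x) (f y) = dist x y) \<longrightarrow> f = id"
    using assms unfolding cone_like_space_def by auto
  obtain S where S: "G = gen_group S" using assms unfolding cone_like_space_def by auto
  have comm: "f (g x) = g (f x)" if "f \<in> G" "g \<in> G" for f g x
  proof -
    have fg: "f \<circ> g \<in> G" "g \<circ> f \<in> G" using that S gen_group.gen_comp by auto
    have ig: "inv (g \<circ> f) \<in> G" using inv_closed[of S "g \<circ> f"] fg bijG S by auto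
    define h where "h = inv (g \<circ> f) \<circ> (f \<circ> g)"
    have hG: "h \<in> G" unfolding h_def using ig fg S gen_group.gen_comp by auto
    have bgf: "bij (g \<circ> f)" using bijG fg by auto
    have hback: "(g \<circ> f) (h y) = (f \<circ> g) y" for y
      unfolding h_def using bgf surj_f_inv_f[OF bij_is_surj[OF bgf]] by (metis comp_apply)
    have "dist (h y) (h z) = dist y z" for y z
    proof -
      have "dist ((g \<circ> f) (h y)) ((g \<circ> f) (h z)) = rho g * rho f * dist (h y) (h z)"
        using hom that by simp
      moreover have "dist ((f \<circ> g) y) ((f \<circ> g) z) = rho g * rho f * dist y z"
        using hom that by simp
      moreover have "rho g * rho f > 0" using hom that by simp
      ultimately show ?thesis using hback by (metis mult_pos_pos mult_cancel_left comp_apply order_less_irrefl)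
    qed
    then have "h = id" using iso hG by blast
    then have "(g \<circ> f) (h x) = (f \<circ> g) x" using hback by blast
    then show ?thesis using \<open>h = id\<close> by simp
  qed
  show ?thesis
  proof
    fix x
    show "\<exists>K>0. \<forall>f\<in>G. rho f < 1 \<longrightarrow> dist x (f x) < K"
    proof (cases "\<exists>g\<in>G. rho g < 1")
      case False
      then show ?thesis by (auto intro: exI[of _ 1])
    next
      case True
      then obtain g where g: "g \<in> G" "rho g < 1" by blast
      have rg: "rho g > 0" using hom g by auto
      define K where "K = 2 * dist x (g x) / (1 - rho g) + 1"
      have "K > 0" unfolding K_def using g by (simp add: add_nonneg_pos)
      moreover have "dist x (f x) < K" if f: "f \<in> G" "rho f < 1" for f
      proof -
        have rf: "rho f > 0" using hom f by auto
        have "dist x (f x) \<le> dist x (g x) + dist (g x) (g (f x)) + dist (g (f x)) (f x)"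
          by (meson dist_triangle order_trans add_right_mono)
        also have "dist (g x) (g (f x)) = rho g * dist x (f x)" using hom g by auto
        also have "dist (g (f x)) (f x) = rho f * dist (g x) x" using hom f comm[OF f(1) g(1)] by metis
        also have "rho f * dist (g x) x \<le> dist x (g x)"
          using f rf by (simp add: dist_commute mult_left_le_one_le)
        finally have "(1 - rho g) * dist x (f x) \<le> 2 * dist x (g x)" by (simp add: algebra_simps)
        then have "dist x (f x) \<le> 2 * dist x (g x) / (1 - rho g)"
          using g by (simp add: field_simps)
        then show ?thesis unfolding K_def by simp
      qed
      ultimately show ?thesis by blast
    qed
  qed
qed

end
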